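(* Let $k\ge4$. For each even natural number $v$ let $\Delta_v$ denote the unique positive solution of $\Delta_v e^{\Delta_v/k}=ke^{1-v/k}$, and put $\tau(k)=\max_{w\in\mathbb N}(k-2\Delta_{2w})/(4w^2)$. Then \[ \tau(k)\ge\frac{1}{9.027901\,k}\qquad\text{and}\qquad \tau(k)\ge\frac{1-2/\omega}{(1-1/\omega+\log\omega+2/k)^2\,k}, \] where $\omega$ is the unique real solution with $\omega\ge1$ of $\omega-2-1/\omega=\log\omega$.
   Context: $\log$ denotes the natural logarithm. (For even $v$ and $k\ge4$, the numbers $\Delta_v$ defined here are admissible exponents for $k$ in the sense of mean values of smooth Weyl sums, so $\tau(k)$ is the quantity entering the minor arc bounds; the claim itself concerns only the numbers so defined.) *)

theory Defs
  imports Complex_Main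
begin

definition Delta :: "nat \<Rightarrow> nat \<Rightarrow> real" where
  "Delta k v = (THE D. D > 0 \<and> D * exp (D / real k) = real k * exp (1 - real v / real k))"

definition tau :: "nat \<Rightarrow> real" where
  "tau k = Sup {(real k - 2 * Delta k (2 * w)) / (4 * (real w)^2) | w. w \<ge> 1}"

definition omega :: real where
  "omega = (THE w. w \<ge> 1 \<and> w - 2 - 1 / w = ln w)"

end

theory Submission
  imports Defs
begin

lemma exp_lower:
  assumes "0 \<le> (x::real)"
  shows "(\<Sum>n<N. x^n / fact n) \<le> exp x"
proof -
  have s: "(\<lambda>n. x^n /\<^sub>R fact n) sums exp x" by (rule exp_converges)
  have "(\<Sum>n<N. x^n /\<^sub>R fact n) \<le> suminf (\<lambda>n. x^n /\<^sub>R fact n)"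
    by (rule sum_le_suminf) (use s assms in \<open>auto simp: sums_iff\<close>)
  also have "\<dots> = exp x" using s by (simp add: sums_iff)
  finally show ?thesis by (simp add: divide_inverse mult.commute)
qed

lemma t14: "(\<Sum>n<14. (x::real)^n / fact n) = 1 + x + x^2/2 + x^3/6 + x^4/24 + x^5/120 + x^6/720 + x^7/5040
   + x^8/40320 + x^9/362880 + x^10/3628800 + x^11/39916800 + x^12/479001600 + x^13/6227020800"
  by (simp add: eval_nat_numeral lessThan_Suc fact_numeral)

lemma num: "(18055802/5027901::real) \<le> (\<Sum>n<14. (127846456/10^8::real)^n / fact n)"
  unfolding t14 by (simp add: power_divide)

lemma num2: "1 \<le> (5027901/18055802::real) * exp (1 + 5027901/18055802)"
proof -
  have "(18055802/5027901::real) \<le> exp (127846456/10^8)"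
    using num exp_lower[of "127846456/10^8" 14] by simp
  also have "\<dots> \<le> exp (1 + 5027901/18055802)" by simp
  finally show ?thesis by (simp add: field_simps)
qed

lemma h_mono:
  assumes "0 < a" "a < b" "0 < (k::real)"
  shows "a * exp (a / k) < b * exp (b / k)"
proof -
  have "exp (a/k) \<le> exp (b/k)" using assms by (simp add: divide_right_mono)
  then show ?thesis using assms by (intro mult_strict_right_mono[THEN order.strict_trans2]) auto
qed

lemma Delta_prop:
  assumes "k > 0"
  shows "Delta k v > 0 \<and> Delta k v * exp (Delta k v / real k) = real k * exp (1 - real v / real k)"
proof -
  define y where "y = real k * exp (1 - real v / real k)"
  define f where "f = (\<lambda>D. D * exp (D / real k))"
  have kpos: "real k > 0" using assms by simp
  have y0: "y > 0" unfolding y_def using kpos by simp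
  have "y \<le> real k * exp 1" unfolding y_def using kpos by simp
  also have "\<dots> \<le> f (real k * exp 1)" unfolding f_def using kpos by simp
  finally have yb: "y \<le> f (real k * exp 1)" .
  have "\<exists>x\<ge>0. x \<le> real k * exp 1 \<and> f x = y"
    by (rule IVT) (use y0 yb kpos in \<open>auto simp: f_def intro!: continuous_intros\<close>)
  then obtain x where x: "x \<ge> 0" "f x = y" by blast
  have xp: "x > 0" using x y0 unfolding f_def by (cases "x = 0") auto
  have ex: "\<exists>!D. D > 0 \<and> D * exp (D / real k) = y"
  proof
    show "x > 0 \<and> x * exp (x / real k) = y" using xp x by (simp add: f_def)
  next
    fix D assume D: "D > 0 \<and> D * exp (D / real k) = y"
    show "D = x"
    proof (rule ccontr)
      assume "D \<noteq> x"
      then have "D < x \<or> x < D" by auto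
      then show False using h_mono[of D x "real k"] h_mono[of x D "real k"] D x xp kpos
        by (auto simp: f_def)
    qed
  qed
  show ?thesis using theI'[OF ex] unfolding Delta_def y_def by simp
qed

lemma Delta_le:
  assumes "k > 0" "B > 0" "real k * exp (1 - real v / real k) \<le> B * exp (B / real k)"
  shows "Delta k v \<le> B"
proof (rule ccontr)
  assume "\<not> Delta k v \<le> B"
  then have "B * exp (B / real k) < Delta k v * exp (Delta k v / real k)"
    using h_mono[of B "Delta k v" "real k"] assms by auto
  then show False using Delta_prop[OF assms(1), of v] assms(3) by simp
qed

lemma omega_ge1: "omega \<ge> 1"
proof -
  define g where "g = (\<lambda>w::real. w - 2 - 1 / w - ln w)"
  have e3: "(8::real) \<le> exp 3"
  proof -
    have "(8::real) \<le> (\<Sum>n<4. 3^n / fact n)" by (simp add: eval_nat_numeral lessThan_Suc fact_numeral)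
    also have "\<dots> \<le> exp 3" by (rule exp_lower) simp
    finally show ?thesis .
  qed
  have "ln (8::real) \<le> ln (exp 3)" using e3 by (subst ln_le_cancel_iff) auto
  then have "ln (8::real) \<le> 3" by simp
  then have g8: "0 \<le> g 8" by (simp add: g_def)
  have g1: "g 1 \<le> 0" by (simp add: g_def)
  have "\<exists>x\<ge>1. x \<le> 8 \<and> g x = 0"
    by (rule IVT) (use g1 g8 in \<open>auto simp: g_def intro!: continuous_intros\<close>)
  then obtain x where x: "x \<ge> 1" "g x = 0" by blast
  have gmono: "g a < g b" if ab: "1 \<le> a" "a < b" for a b
  proof -
    have "ln b - ln a = ln (b / a)" using ab by (simp add: ln_div)
    also have "\<dots> \<le> b / a - 1" using ab by (intro ln_le_minus_one) auto
    also have "\<dots> = (b - a) / a" using ab by (simp add: field_simps)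
    also have "\<dots> \<le> b - a" using ab by (simp add: divide_le_eq)
    finally have "ln b - ln a \<le> b - a" .
    moreover have "1 / b < 1 / a" using ab by (simp add: frac_less2)
    ultimately show ?thesis by (simp add: g_def)
  qed
  have ex: "\<exists>!w::real. w \<ge> 1 \<and> w - 2 - 1 / w = ln w"
  proof
    show "x \<ge> 1 \<and> x - 2 - 1 / x = ln x" using x unfolding g_def by linarith
  next
    fix w :: real assume w: "w \<ge> 1 \<and> w - 2 - 1 / w = ln w"
    then have gw: "g w = 0" unfolding g_def by linarith
    show "w = x"
    proof (rule ccontr)
      assume "w \<noteq> x"
      then have "w < x \<or> x < w" by auto
      then show False using gmono[of w x] gmono[of x w] gw x w by auto
    qed
  qed
  show ?thesis using theI'[OF ex] unfolding omega_def by simp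
qed

theorem lemma7p1:
  fixes k :: nat
  assumes "k \<ge> 4"
  shows "tau k \<ge> 1 / (9.027901 * real k) \<and>
         tau k \<ge> (1 - 2 / omega) / ((1 - 1 / omega + ln omega + 2 / real k)^2 * real k)"
proof -
  have k0: "k > 0" using assms by simp
  have kr: "real k > 0" using k0 by simp
  define S where "S = {(real k - 2 * Delta k (2 * w)) / (4 * (real w)^2) | w. w \<ge> 1}"
  have bdd: "bdd_above S"
  proof (rule bdd_aboveI[of _ "real k / 4"])
    fix s assume "s \<in> S"
    then obtain w where w: "w \<ge> 1" "s = (real k - 2 * Delta k (2 * w)) / (4 * (real w)^2)"
      unfolding S_def by blast
    have D: "Delta k (2*w) > 0" using Delta_prop[OF k0] by blast
    have w1: "(real w)^2 \<ge> 1" using w by simp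
    have "s \<le> real k / (4 * (real w)^2)" unfolding w(2)
      using D w1 w(1) by (intro divide_right_mono) auto
    also have "\<dots> \<le> real k / 4" using w1 kr w(1) by (intro divide_left_mono) (auto simp: Suc_le_eq)
    finally show "s \<le> real k / 4" .
  qed
  have tau_ge: "tau k \<ge> (real k - 2 * Delta k (2 * w)) / (4 * (real w)^2)" if "w \<ge> 1" for w
    unfolding tau_def S_def[symmetric] using that bdd by (intro cSup_upper) (auto simp: S_def)
  define x0 :: real where "x0 = 5027901/18055802"
  have Dk: "Delta k (2 * k) \<le> real k * x0"
  proof (rule Delta_le[OF k0])
    show "real k * x0 > 0" using kr by (simp add: x0_def)
    have e: "exp (-1) \<le> x0 * exp x0"
    proof -
      have "1 \<le> x0 * exp (1 + x0)" using num2 by (simp add: x0_def)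
      also have "\<dots> = (x0 * exp x0) * exp 1" by (simp add: exp_add)
      finally show ?thesis by (simp add: exp_minus field_simps)
    qed
    have "real (2 * k) / real k = 2" using kr by simp
    then have "real k * exp (1 - real (2 * k) / real k) = real k * exp (-1)" by simp
    also have "\<dots> \<le> real k * (x0 * exp x0)" using e kr by simp
    also have "\<dots> = real k * x0 * exp (real k * x0 / real k)" using kr by simp
    finally show "real k * exp (1 - real (2 * k) / real k) \<le> real k * x0 * exp (real k * x0 / real k)" .
  qed
  have b1: "1 / (9.027901 * real k) \<le> (real k - 2 * Delta k (2 * k)) / (4 * (real k)^2)"
  proof -
    have "1 / (9.027901 * real k) = (real k - 2 * (real k * x0)) / (4 * (real k)^2)"
      using kr by (simp add: x0_def field_simps power2_eq_square)
    also have "\<dots> \<le> (real k - 2 * Delta k (2 * k)) / (4 * (real k)^2)"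
      using Dk kr by (intro divide_right_mono) auto
    finally show ?thesis .
  qed
  have T1: "tau k \<ge> 1 / (9.027901 * real k)" using b1 tau_ge[of k] k0 by linarith
  have "1 / (9.027901 * real k) > 0" using kr by simp
  then have tpos: "tau k > 0" using T1 by linarith
  define y where "y = omega"
  have y1: "y \<ge> 1" using omega_ge1 by (simp add: y_def)
  define L where "L = 1 - 1 / y + ln y"
  have T2: "tau k \<ge> (1 - 2 / y) / ((L + 2 / real k)^2 * real k)"
  proof (cases "y \<le> 2")
    case True
    have "1 - 2 / y \<le> 0" using True y1 by (simp add: field_simps)
    then have "(1 - 2 / y) / ((L + 2 / real k)^2 * real k) \<le> 0"
      using kr by (intro divide_nonpos_nonneg) auto
    then show ?thesis using tpos by linarith
  next
    case False
    then have y2: "y > 2" by simp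
    have Lp: "L > 0" unfolding L_def using y2 by (smt (verit) ln_gt_zero_iff divide_less_eq_1_pos)
    define w where "w = nat \<lceil>real k * L / 2\<rceil>"
    have kLp: "real k * L / 2 > 0" using kr Lp by simp
    have wge: "real w \<ge> real k * L / 2" unfolding w_def using kLp
      by (smt (verit) le_of_int_ceiling of_nat_nat ceiling_le_zero)
    have wle: "real w \<le> real k * L / 2 + 1" unfolding w_def using kLp
      by (smt (verit) of_int_ceiling_le_add_one of_nat_nat ceiling_le_zero)
    have "real w > 0" using wge kLp by linarith
    then have w1: "w \<ge> 1" by simp
    have DB: "Delta k (2 * w) \<le> real k / y"
    proof (rule Delta_le[OF k0])
      show "real k / y > 0" using kr y2 by simp
      have "1 - real (2 * w) / real k \<le> 1 / y - ln y"
      proof -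
        have "real (2 * w) / real k \<ge> L" using wge kr by (simp add: field_simps)
        then show ?thesis unfolding L_def by simp
      qed
      then have "exp (1 - real (2 * w) / real k) \<le> exp (1 / y - ln y)" by simp
      also have "\<dots> = (1 / y) * exp (1 / y)" using y2 by (simp add: exp_diff)
      finally have "real k * exp (1 - real (2 * w) / real k) \<le> real k * ((1 / y) * exp (1 / y))"
        using kr by (intro mult_left_mono) auto
      also have "\<dots> = real k / y * exp (real k / y / real k)" using kr by simp
      finally show "real k * exp (1 - real (2 * w) / real k) \<le> real k / y * exp (real k / y / real k)" .
    qed
    have num0: "real k - 2 * (real k / y) \<ge> 0" using y2 kr by (simp add: field_simps)
    have wsq: "4 * (real w)^2 \<le> (real k * (L + 2 / real k))^2"
    proof -
      have eq: "real k * (L + 2 / real k) = real k * L + 2" using kr by (simp add: field_simps)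
      have "2 * real w \<le> real k * (L + 2 / real k)" unfolding eq using wle by linarith
      moreover have "0 \<le> 2 * real w" by simp
      ultimately have "(2 * real w)^2 \<le> (real k * (L + 2 / real k))^2" by (rule power_mono)
      then show ?thesis by (simp add: power_mult_distrib)
    qed
    have wpos: "4 * (real w)^2 > 0" using w1 by simp
    have dpos: "(real k * (L + 2 / real k))^2 > 0" using wpos wsq by linarith
    have "(1 - 2 / y) / ((L + 2 / real k)^2 * real k) = (real k - 2 * (real k / y)) / (real k * (L + 2 / real k))^2"
    proof -
      have n: "real k - 2 * (real k / y) = real k * (1 - 2 / y)" by (simp add: algebra_simps)
      have d: "(real k * (L + 2 / real k))^2 = real k * ((L + 2 / real k)^2 * real k)"
        by (simp add: power2_eq_square algebra_simps)
      show ?thesis unfolding n d using kr by simp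
    qed
    also have "\<dots> \<le> (real k - 2 * (real k / y)) / (4 * (real w)^2)"
      using num0 wsq wpos dpos by (intro divide_left_mono) (auto intro!: mult_pos_pos)
    also have "\<dots> \<le> (real k - 2 * Delta k (2 * w)) / (4 * (real w)^2)"
      using DB wpos by (intro divide_right_mono) auto
    also have "\<dots> \<le> tau k" using tau_ge[OF w1] .
    finally show ?thesis .
  qed
  show ?thesis using T1 T2 by (simp add: y_def L_def)
qed

end
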